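(* Suppose $F\in\mathcal N$ is $n$ times renormalizable, and for $k=0,1,\dots,n$ let $F_k=R^kF$ and $\boldsymbol\delta_k=\pi_{\mathbf z}\circ F_k$. Then for $k=1,\dots,n$: $X_k(w)=X_{k-1}\circ\psi^k_c(w)-\mathbf q_{k-1}(\sigma_{k-1}x)$, $Y_k(w)=Z_{k-1}\circ\psi^k_c(w)\cdot\big[Y_{k-1}\circ\psi^k_v(w)+Z_{k-1}\circ\psi^k_v(w)\cdot\mathbf q_{k-1}(\sigma_{k-1}y)\big]$, $Z_k(w)=Z_{k-1}\circ\psi^k_c(w)\cdot Z_{k-1}\circ\psi^k_v(w)$.
   Context: Fix an integer $m\ge 1$ and a hypercube $B\subset\mathbb R^{m+2}$; points are $w=(x,y,\mathbf z)$, $\mathbf z=(z_1,\dots,z_m)$. An $(m+2)$-dimensional Hénon-like map is an analytic orientation-preserving map $F(x,y,\mathbf z)=(f(x)-\varepsilon(x,y,\mathbf z),\,x,\,\boldsymbol\delta(x,y,\mathbf z))$ on $B$ with $f$ unimodal, $\boldsymbol\delta=(\delta^1,\dots,\delta^m)$, $\|\varepsilon\|,\|\boldsymbol\delta\|\le C\bar\varepsilon$ for small $\bar\varepsilon>0$. Its renormalization is $RF=\Lambda\circ H\circ F^2\circ H^{-1}\circ\Lambda^{-1}$ where $H(x,y,\mathbf z)=(f(x)-\varepsilon(x,y,\mathbf z),\,y,\,\mathbf z-\boldsymbol\delta(y,f^{-1}(y),\mathbf 0))$ and $\Lambda^{-1}(w)=\sigma_0w$ is a dilation by a suitable constant. For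 the $k$-th renormalization $F_k(w)=(f_k(x)-\varepsilon_k(w),x,\boldsymbol\delta_k(w))$ with $H_k$, dilation $\Lambda_k^{-1}(w)=\sigma_kw$, set $\psi^{k+1}_v=H_k^{-1}\circ\Lambda_k^{-1}$ and $\psi^{k+1}_c=F_k\circ\psi^{k+1}_v$. Notation: $X_k=(\partial_x\delta^1_k,\dots,\partial_x\delta^m_k)^T$, $Y_k=(\partial_y\delta^1_k,\dots,\partial_y\delta^m_k)^T$, $Z_k$ the $m\times m$ matrix with $(j,i)$ entry $\partial_{z_i}\delta^j_k$ (and $X=X_0$, $Y=Y_0$, $Z=Z_0$); $\mathbf q_k(y)=\frac{d}{dy}\boldsymbol\delta_k(y,f_k^{-1}(y),\mathbf 0)$ (column vector). $\mathcal N$ is the set of renormalizable $(m+2)$-dimensional Hénon-like maps $F$ with $Y\circ F(w)+Z\circ F(w)\cdot X(w)=\mathbf 0$ for all $w\in\psi^1_c(B)\cup\psi^1_v(B)$. *)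

theory Defs
  imports "HOL-Analysis.Analysis"
begin

text \<open>Points of R^(m+2) are triples (x, y, z) with z a vector indexed by the finite type 'm
  (so m = CARD('m) >= 1).\<close>

type_synonym 'm pt = "real \<times> real \<times> (real ^ 'm)"

definition hypercube :: "'m::finite pt set \<Rightarrow> bool" where
  "hypercube B \<longleftrightarrow> (\<exists>c r. 0 < r \<and> B = cbox (c - r *\<^sub>R One) (c + r *\<^sub>R One))"

definition henon :: "(real \<Rightarrow> real) \<Rightarrow> ('m::finite pt \<Rightarrow> real) \<Rightarrow> ('m pt \<Rightarrow> real ^ 'm)
    \<Rightarrow> 'm pt \<Rightarrow> 'm pt" where
  "henon f eps dl = (\<lambda>(x, y, z). (f x - eps (x, y, z), x, dl (x, y, z)))"

definition Hmap :: "(real \<Rightarrow> real) \<Rightarrow> ('m::finite pt \<Rightarrow> real) \<Rightarrow> ('m pt \<Rightarrow> real ^ 'm)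
    \<Rightarrow> (real \<Rightarrow> real) \<Rightarrow> 'm pt \<Rightarrow> 'm pt" where
  "Hmap f eps dl finv = (\<lambda>(x, y, z). (f x - eps (x, y, z), y, z - dl (y, finv y, 0)))"

text \<open>psi_v = H^{-1} o Lambda^{-1}, Lambda^{-1} w = s w;  psi_c = F o psi_v.\<close>
definition psi_v :: "('m::finite pt \<Rightarrow> 'm pt) \<Rightarrow> real \<Rightarrow> 'm pt \<Rightarrow> 'm pt" where
  "psi_v Hinv s = (\<lambda>w. Hinv (s *\<^sub>R w))"

definition psi_c :: "('m::finite pt \<Rightarrow> 'm pt) \<Rightarrow> ('m pt \<Rightarrow> 'm pt) \<Rightarrow> real \<Rightarrow> 'm pt \<Rightarrow> 'm pt" where
  "psi_c F Hinv s = F \<circ> psi_v Hinv s"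

definition Xd :: "('m::finite pt \<Rightarrow> real ^ 'm) \<Rightarrow> 'm pt \<Rightarrow> real ^ 'm" where
  "Xd dl = (\<lambda>(x, y, z). vector_derivative (\<lambda>t. dl (t, y, z)) (at x))"

definition Yd :: "('m::finite pt \<Rightarrow> real ^ 'm) \<Rightarrow> 'm pt \<Rightarrow> real ^ 'm" where
  "Yd dl = (\<lambda>(x, y, z). vector_derivative (\<lambda>t. dl (x, t, z)) (at y))"

text \<open>Zd dl w $ j $ i = partial derivative of delta^j with respect to z_i.\<close>
definition Zd :: "('m::finite pt \<Rightarrow> real ^ 'm) \<Rightarrow> 'm pt \<Rightarrow> real ^ 'm ^ 'm" where
  "Zd dl = (\<lambda>(x, y, z). \<chi> j i.
     vector_derivative (\<lambda>t. dl (x, y, \<chi> l. if l = i then t else z $ l)) (at (z $ i)) $ j)"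

definition qd :: "('m::finite pt \<Rightarrow> real ^ 'm) \<Rightarrow> (real \<Rightarrow> real) \<Rightarrow> real \<Rightarrow> real ^ 'm" where
  "qd dl finv t0 = vector_derivative (\<lambda>t. dl (t, finv t, 0)) (at t0)"

text \<open>One renormalization step: F' = R F = Lambda o H o F^2 o H^{-1} o Lambda^{-1},
  with Lambda^{-1} w = s w, H^{-1} (here Hinv) the inverse of H between a domain D and
  a neighbourhood of s B, and psi_v(B), psi_c(B) contained in B.\<close>
definition renorm_step ::
  "'m::finite pt set \<Rightarrow> ('m::finite pt \<Rightarrow> 'm pt) \<Rightarrow> ('m pt \<Rightarrow> 'm pt) \<Rightarrow> ('m pt \<Rightarrow> 'm pt) \<Rightarrow> real
     \<Rightarrow> ('m::finite pt \<Rightarrow> 'm pt) \<Rightarrow> bool" where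
  "renorm_step B F H Hinv s F' \<longleftrightarrow>
     s \<noteq> 0 \<and>
     (\<exists>U D. open U \<and> B \<subseteq> U \<and>
        (\<forall>w\<in>U. Hinv (s *\<^sub>R w) \<in> D \<and> H (Hinv (s *\<^sub>R w)) = s *\<^sub>R w
                 \<and> Hinv differentiable (at (s *\<^sub>R w))) \<and>
        (\<forall>v\<in>D. Hinv (H v) = v) \<and>
        (\<forall>w\<in>U. F (F (Hinv (s *\<^sub>R w))) \<in> D \<and>
                 F' w = (1 / s) *\<^sub>R H (F (F (Hinv (s *\<^sub>R w)))))) \<and>
     psi_v Hinv s ` B \<subseteq> B \<and> psi_c F Hinv s ` B \<subseteq> B"

text \<open>The sequence F_k = henon (f k) (eps k) (dl k), k = 0..n, of renormalizations of F_0,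
  with inverse branches finv k of f k, dilation constants sg k and inverses Hinv k of H_k.\<close>
definition renormalizable_n ::
  "'m::finite pt set \<Rightarrow> nat \<Rightarrow> (nat \<Rightarrow> real \<Rightarrow> real) \<Rightarrow> (nat \<Rightarrow> 'm pt \<Rightarrow> real)
     \<Rightarrow> (nat \<Rightarrow> 'm pt \<Rightarrow> real ^ 'm) \<Rightarrow> (nat \<Rightarrow> real \<Rightarrow> real) \<Rightarrow> (nat \<Rightarrow> real)
     \<Rightarrow> (nat \<Rightarrow> 'm pt \<Rightarrow> 'm pt) \<Rightarrow> bool" where
  "renormalizable_n B n f eps dl finv sg Hinv \<longleftrightarrow>
     (\<forall>k\<le>n. (\<forall>t. f k differentiable (at t)) \<and> (\<forall>w. eps k differentiable (at w))
             \<and> (\<forall>w. dl k differentiable (at w))) \<and>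
     (\<forall>k<n.
        (\<forall>x y z. (x, y, z) \<in> B \<longrightarrow>
           (\<forall>t\<in>{sg k * x, sg k * y}.
              f k (finv k t) = t \<and> finv k differentiable (at t))) \<and>
        renorm_step B (henon (f k) (eps k) (dl k)) (Hmap (f k) (eps k) (dl k) (finv k))
          (Hinv k) (sg k) (henon (f (Suc k)) (eps (Suc k)) (dl (Suc k))))"

definition in_N ::
  "'m::finite pt set \<Rightarrow> (real \<Rightarrow> real) \<Rightarrow> ('m::finite pt \<Rightarrow> real) \<Rightarrow> ('m pt \<Rightarrow> real ^ 'm)
     \<Rightarrow> (real \<Rightarrow> real) \<Rightarrow> real \<Rightarrow> ('m::finite pt \<Rightarrow> 'm pt) \<Rightarrow> ('m pt \<Rightarrow> 'm pt) \<Rightarrow> bool" where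
  "in_N B f eps dl finv s Hinv F1 \<longleftrightarrow>
     (\<forall>x y z. (x, y, z) \<in> B \<longrightarrow>
        (\<forall>t\<in>{s * x, s * y}. f (finv t) = t \<and> finv differentiable (at t))) \<and>
     renorm_step B (henon f eps dl) (Hmap f eps dl finv) Hinv s F1 \<and>
     (\<forall>w \<in> psi_c (henon f eps dl) Hinv s ` B \<union> psi_v Hinv s ` B.
        Yd dl (henon f eps dl w) + Zd dl (henon f eps dl w) *v Xd dl w = 0)"

end

theory Submission
  imports Defs
begin


lemma vd_chain:
  assumes d: "(d has_derivative L) (at (c t0))"
    and c: "(c has_derivative (\<lambda>h. h *\<^sub>R e)) (at t0)"
  shows "vector_derivative (\<lambda>t. d (c t)) (at t0) = L e"
proof -
  have "(d \<circ> c has_derivative L \<circ> (\<lambda>h. h *\<^sub>R e)) (at t0)"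
    by (rule diff_chain_at[OF c d])
  moreover have "L \<circ> (\<lambda>h. h *\<^sub>R e) = (\<lambda>h. h *\<^sub>R L e)"
    using has_derivative_linear[OF d] by (auto simp: linear_scale)
  ultimately have "((\<lambda>t. d (c t)) has_vector_derivative L e) (at t0)"
    by (simp add: has_vector_derivative_def o_def)
  thus ?thesis by (rule vector_derivative_at)
qed

lemma curve_eq: "(\<chi> l. if l = i then t else z $ l) = z + (t - z $ i) *\<^sub>R axis i 1"
  by (simp add: vec_eq_iff axis_def)

lemma partials:
  fixes d :: "'m::finite pt \<Rightarrow> real ^ 'm"
  assumes D: "(d has_derivative L) (at (x, y, z))"
  shows "Xd d (x, y, z) = L (1, 0, 0)" "Yd d (x, y, z) = L (0, 1, 0)"
    "Zd d (x, y, z) $ j $ i = L (0, 0, axis i 1) $ j"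
    "Zd d (x, y, z) *v u = L (0, 0, u)"
proof -
  show "Xd d (x, y, z) = L (1, 0, 0)"
    unfolding Xd_def using D
    by (auto simp: zero_prod_def intro!: vd_chain[where c="\<lambda>t. (t, y, z)"] derivative_eq_intros)
  show "Yd d (x, y, z) = L (0, 1, 0)"
    unfolding Yd_def using D
    by (auto simp: zero_prod_def intro!: vd_chain[where c="\<lambda>t. (x, t, z)"] derivative_eq_intros)
  have Zi: "Zd d (x, y, z) $ j $ i = L (0, 0, axis i 1) $ j" for i j
  proof -
    have "vector_derivative (\<lambda>t. d (x, y, \<chi> l. if l = i then t else z $ l)) (at (z $ i))
        = L (0, 0, axis i 1)"
      unfolding curve_eq
      by (rule vd_chain[where c="\<lambda>t. (x, y, z + (t - z $ i) *\<^sub>R axis i 1)"])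
        (use D in \<open>auto simp: zero_prod_def intro!: derivative_eq_intros\<close>)
    thus ?thesis by (simp add: Zd_def)
  qed
  thus "Zd d (x, y, z) $ j $ i = L (0, 0, axis i 1) $ j" .
  have lin: "linear L" by (rule has_derivative_linear[OF D])
  have lin2: "linear (\<lambda>u. L (0, 0, u))"
  proof (rule linearI)
    fix a b :: "real ^ 'm" and c :: real
    show "L (0, 0, a + b) = L (0, 0, a) + L (0, 0, b)"
      using linear_add[OF lin, of "(0, 0, a)" "(0, 0, b)"] by simp
    show "L (0, 0, c *\<^sub>R a) = c *\<^sub>R L (0, 0, a)"
      using linear_scale[OF lin, of c "(0, 0, a)"] by simp
  qed
  show "Zd d (x, y, z) *v u = L (0, 0, u)"
  proof -
    have "L (0, 0, u) = L (0, 0, \<Sum>i\<in>UNIV. u $ i *\<^sub>R axis i 1)"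
      using basis_expansion[of u] by (simp add: scalar_mult_eq_scaleR)
    also have "\<dots> = (\<Sum>i\<in>UNIV. u $ i *\<^sub>R L (0, 0, axis i 1))"
      using linear_sum[OF lin2, of "\<lambda>i. u $ i *\<^sub>R axis i 1" UNIV] linear_scale[OF lin2]
      by simp
    finally show ?thesis
      by (simp add: vec_eq_iff matrix_vector_mult_def Zi sum_component mult.commute)
  qed
qed

lemma decomp:
  fixes d :: "'m::finite pt \<Rightarrow> real ^ 'm"
  assumes D: "(d has_derivative L) (at p)"
  shows "L (a, b, c) = a *\<^sub>R Xd d p + b *\<^sub>R Yd d p + Zd d p *v c"
proof -
  obtain x y z where p: "p = (x, y, z)" by (cases p) auto
  have lin: "linear L" by (rule has_derivative_linear[OF D])
  have "(a, b, c) = a *\<^sub>R (1, 0, 0) + b *\<^sub>R (0, 1, 0) + (0, 0, c)" by simp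
  hence "L (a, b, c) = a *\<^sub>R L (1, 0, 0) + b *\<^sub>R L (0, 1, 0) + L (0, 0, c)"
    by (simp only: linear_add[OF lin] linear_scale[OF lin])
  thus ?thesis using partials[OF D[unfolded p]] p by simp
qed

lemma level:
  fixes B :: "'m::finite pt set" and dl dl' :: "'m pt \<Rightarrow> real ^ 'm"
  assumes rs: "renorm_step B (henon f eps dl) (Hmap f eps dl finv) Hinv s (henon f' eps' dl')"
    and ddl: "\<And>w. dl differentiable (at w)"
    and fx: "finv differentiable (at (s * x))" and fy: "finv differentiable (at (s * y))"
    and wB: "(x, y, z) \<in> B"
    and N: "Yd dl (henon f eps dl (psi_v Hinv s (x, y, z)))
       + Zd dl (henon f eps dl (psi_v Hinv s (x, y, z))) *v Xd dl (psi_v Hinv s (x, y, z)) = 0"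
  shows "Xd dl' (x, y, z) = Xd dl (psi_c (henon f eps dl) Hinv s (x, y, z)) - qd dl finv (s * x)"
    "Yd dl' (x, y, z) = Zd dl (psi_c (henon f eps dl) Hinv s (x, y, z))
           *v (Yd dl (psi_v Hinv s (x, y, z)) + Zd dl (psi_v Hinv s (x, y, z)) *v qd dl finv (s * y))"
    "Zd dl' (x, y, z) = Zd dl (psi_c (henon f eps dl) Hinv s (x, y, z)) ** Zd dl (psi_v Hinv s (x, y, z))"
proof -
  have s0: "s \<noteq> 0" using rs by (simp add: renorm_step_def)
  have ex: "\<exists>U D. open U \<and> B \<subseteq> U \<and>
        (\<forall>w\<in>U. Hinv (s *\<^sub>R w) \<in> D \<and> Hmap f eps dl finv (Hinv (s *\<^sub>R w)) = s *\<^sub>R w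
                 \<and> Hinv differentiable (at (s *\<^sub>R w))) \<and>
        (\<forall>v\<in>D. Hinv (Hmap f eps dl finv v) = v) \<and>
        (\<forall>w\<in>U. henon f eps dl (henon f eps dl (Hinv (s *\<^sub>R w))) \<in> D \<and>
                 henon f' eps' dl' w = (1 / s) *\<^sub>R Hmap f eps dl finv (henon f eps dl (henon f eps dl (Hinv (s *\<^sub>R w)))))"
    using rs unfolding renorm_step_def by (elim conjE)
  then obtain U D where H: "open U \<and> B \<subseteq> U \<and>
        (\<forall>w\<in>U. Hinv (s *\<^sub>R w) \<in> D \<and> Hmap f eps dl finv (Hinv (s *\<^sub>R w)) = s *\<^sub>R w
                 \<and> Hinv differentiable (at (s *\<^sub>R w))) \<and>
        (\<forall>v\<in>D. Hinv (Hmap f eps dl finv v) = v) \<and>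
        (\<forall>w\<in>U. henon f eps dl (henon f eps dl (Hinv (s *\<^sub>R w))) \<in> D \<and>
                 henon f' eps' dl' w = (1 / s) *\<^sub>R Hmap f eps dl finv (henon f eps dl (henon f eps dl (Hinv (s *\<^sub>R w)))))"
    by (elim exE) (erule that)
  have oU: "open U" and BU: "B \<subseteq> U" using H by simp_all
  have hU: "Hinv (s *\<^sub>R w) \<in> D \<and> Hmap f eps dl finv (Hinv (s *\<^sub>R w)) = s *\<^sub>R w
                 \<and> Hinv differentiable (at (s *\<^sub>R w))" if "w \<in> U" for w
    using H that by (elim conjE) (erule bspec)
  have FU: "henon f' eps' dl' w = (1 / s) *\<^sub>R Hmap f eps dl finv
        (henon f eps dl (henon f eps dl (Hinv (s *\<^sub>R w))))" if "w \<in> U" for w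
    using H that by (elim conjE) (drule bspec, assumption, erule conjunct2)
  define w0 where "w0 = (x, y, z)"
  have w0U: "w0 \<in> U" using wB BU w0_def by auto
  define A where "A w = fst (Hinv (s *\<^sub>R w))" for w
  define phi where "phi t = dl (t, finv t, 0)" for t
  define pv where "pv w = (A w, s * fst (snd w), s *\<^sub>R snd (snd w) + phi (s * fst (snd w)))" for w
  define g where "g w = (s * fst w, A w, dl (pv w))" for w
  define E where "E w = (1 / s) *\<^sub>R (dl (g w) - phi (s * fst w))" for w
  have Hrel: "Hinv (s *\<^sub>R w) = pv w \<and> henon f eps dl (pv w) = g w" if "w \<in> U" for w
  proof -
    obtain a b c where w: "w = (a, b, c)" by (cases w) auto
    obtain p1 p2 p3 where v: "Hinv (s *\<^sub>R w) = (p1, p2, p3)" by (cases "Hinv (s *\<^sub>R w)") auto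
    have "Hmap f eps dl finv (p1, p2, p3) = (s * a, s * b, s *\<^sub>R c)"
      using hU[OF that] v w by simp
    hence e: "f p1 - eps (p1, p2, p3) = s * a" "p2 = s * b" "p3 - dl (p2, finv p2, 0) = s *\<^sub>R c"
      by (auto simp: Hmap_def)
    have "Hinv (s *\<^sub>R w) = pv w" using e v w by (simp add: pv_def A_def phi_def algebra_simps)
    moreover have pvw: "pv w = (p1, s * b, p3)" using calculation v e by simp
    moreover have "henon f eps dl (pv w) = g w"
      using e v w pvw by (simp add: g_def henon_def A_def)
    ultimately show ?thesis by simp
  qed
  have eqU: "dl' w = E w" if "w \<in> U" for w
  proof -
    have "dl' w = snd (snd (henon f' eps' dl' w))" by (cases w) (simp add: henon_def)
    also have "\<dots> = E w" using FU[OF that] Hrel[OF that]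
      by (cases w) (simp add: henon_def Hmap_def E_def g_def phi_def)
    finally show ?thesis .
  qed
  define DH where "DH = frechet_derivative Hinv (at (s *\<^sub>R w0))"
  have dH: "(Hinv has_derivative DH) (at (s *\<^sub>R w0))"
    using hU[OF w0U] by (simp add: DH_def frechet_derivative_works)
  have dsc: "((\<lambda>w. s *\<^sub>R w) has_derivative (\<lambda>h. s *\<^sub>R h)) (at w0)"
    by (auto intro!: derivative_eq_intros)
  have "((\<lambda>w. Hinv (s *\<^sub>R w)) has_derivative (\<lambda>h. DH (s *\<^sub>R h))) (at w0)"
    using diff_chain_at[OF dsc, of Hinv DH] dH by (simp add: o_def)
  hence dA: "(A has_derivative (\<lambda>h. fst (DH (s *\<^sub>R h)))) (at w0)"
    unfolding A_def by (rule has_derivative_fst)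
  define Ld where "Ld p = frechet_derivative dl (at p)" for p
  have dD: "(dl has_derivative Ld p) (at p)" for p
    using ddl[of p] by (simp add: Ld_def frechet_derivative_works)
  have chain: "((\<lambda>w. dl (k w)) has_derivative (\<lambda>h. Ld (k w0) (k' h))) (at w0)"
    if "(k has_derivative k') (at w0)" for k :: "'m pt \<Rightarrow> 'm pt" and k'
    using diff_chain_at[OF that dD[of "k w0"]] by (simp add: o_def)
  have dphi: "(phi has_vector_derivative qd dl finv t) (at t)"
    if fdiff: "finv differentiable (at t)" for t
  proof -
    obtain fd where fd: "(finv has_derivative fd) (at t)"
      using fdiff unfolding differentiable_def by blast
    have c: "((\<lambda>t. (t, finv t, 0::real^'m)) has_derivative (\<lambda>h. (h, fd h, 0))) (at t)"
      using fd by (auto intro!: derivative_eq_intros)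
    have "(phi has_derivative (\<lambda>h. Ld (t, finv t, 0) (h, fd h, 0))) (at t)"
      using diff_chain_at[OF c dD[of "(t, finv t, 0)"]] by (simp add: o_def phi_def[abs_def])
    hence "phi differentiable (at t)" unfolding differentiable_def by blast
    hence hv: "(phi has_vector_derivative vector_derivative phi (at t)) (at t)"
      by (simp add: vector_derivative_works)
    have pe: "phi = (\<lambda>t. dl (t, finv t, 0))" by (simp add: phi_def fun_eq_iff)
    moreover have "vector_derivative phi (at t) = qd dl finv t"
        unfolding qd_def by (subst pe) (rule refl)
    ultimately show ?thesis using hv by simp
  qed
  define qx where "qx = qd dl finv (s * x)"
  define qy where "qy = qd dl finv (s * y)"
  define DA where "DA h = fst (DH (s *\<^sub>R h))" for h
  have dA': "(A has_derivative DA) (at w0)" using dA by (simp add: DA_def[abs_def])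
  have dsy: "((\<lambda>w::'m pt. s * fst (snd w)) has_derivative (\<lambda>h. s * fst (snd h))) (at w0)"
    by (auto intro!: derivative_eq_intros)
  have dphiy: "((\<lambda>w. phi (s * fst (snd w))) has_derivative (\<lambda>h. (s * fst (snd h)) *\<^sub>R qy)) (at w0)"
    using diff_chain_at[OF dsy, of phi "\<lambda>h. h *\<^sub>R qy"] dphi[OF fy]
    by (simp add: o_def has_vector_derivative_def qy_def w0_def)
  have dsx: "((\<lambda>w::'m pt. s * fst w) has_derivative (\<lambda>h. s * fst h)) (at w0)"
    by (auto intro!: derivative_eq_intros)
  have dphix: "((\<lambda>w. phi (s * fst w)) has_derivative (\<lambda>h. (s * fst h) *\<^sub>R qx)) (at w0)"
    using diff_chain_at[OF dsx, of phi "\<lambda>h. h *\<^sub>R qx"] dphi[OF fx]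
    by (simp add: o_def has_vector_derivative_def qx_def w0_def)
  define Dpv where "Dpv h = (DA h, s * fst (snd h), s *\<^sub>R snd (snd h) + (s * fst (snd h)) *\<^sub>R qy)" for h :: "'m pt"
  have dpv: "(pv has_derivative Dpv) (at w0)"
    unfolding pv_def[abs_def] Dpv_def[abs_def]
    by (auto intro!: derivative_eq_intros dA' dphiy)
  define Dg where "Dg h = (s * fst h, DA h, Ld (pv w0) (Dpv h))" for h :: "'m pt"
  have dg: "(g has_derivative Dg) (at w0)"
    unfolding g_def[abs_def] Dg_def[abs_def]
    by (auto intro!: derivative_eq_intros dA' chain[OF dpv])
  define DE where "DE h = (1 / s) *\<^sub>R (Ld (g w0) (Dg h) - (s * fst h) *\<^sub>R qx)" for h :: "'m pt"
  have dE: "(E has_derivative DE) (at w0)"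
    unfolding E_def[abs_def] DE_def[abs_def]
    by (auto intro!: derivative_eq_intros chain[OF dg] dphix)
  have dl': "(dl' has_derivative DE) (at w0)"
    by (rule has_derivative_transform_within_open[OF dE oU w0U]) (simp add: eqU)
  define P where "P = pv w0"
  define G where "G = g w0"
  have Pe: "psi_v Hinv s (x, y, z) = P" using Hrel[OF w0U] by (simp add: psi_v_def P_def w0_def)
  have Ge: "psi_c (henon f eps dl) Hinv s (x, y, z) = G"
    using Hrel[OF w0U] by (simp add: psi_c_def psi_v_def G_def P_def w0_def)
  have hPG: "henon f eps dl P = G" using Hrel[OF w0U] by (simp add: P_def G_def)
  have N': "Yd dl G + Zd dl G *v Xd dl P = 0" using N unfolding Pe hPG .
  have NN: "Zd dl G *v Xd dl P = - Yd dl G"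
    using N' by (metis add.commute eq_neg_iff_add_eq_0)
  have LP: "Ld P (a, b, c) = a *\<^sub>R Xd dl P + b *\<^sub>R Yd dl P + Zd dl P *v c" for a b c
    by (rule decomp[OF dD])
  have LG: "Ld G (a, b, c) = a *\<^sub>R Xd dl G + b *\<^sub>R Yd dl G + Zd dl G *v c" for a b c
    by (rule decomp[OF dD])
  note pd = partials[OF dl'[unfolded w0_def]]
  have DE1: "DE (1, 0, 0) = Xd dl G - qx"
    using s0 by (simp add: DE_def Dg_def Dpv_def LP LG P_def[symmetric] G_def[symmetric]
        matrix_vector_mult_scaleR NN algebra_simps)
  have DE2: "DE (0, 1, 0) = Zd dl G *v (Yd dl P + Zd dl P *v qy)"
    using s0 by (simp add: DE_def Dg_def Dpv_def LP LG P_def[symmetric] G_def[symmetric]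
        matrix_vector_mult_scaleR NN algebra_simps)
  have DE3: "DE (0, 0, u) = Zd dl G *v (Zd dl P *v u)" for u
    using s0 by (simp add: DE_def Dg_def Dpv_def LP LG P_def[symmetric] G_def[symmetric]
        matrix_vector_mult_scaleR NN algebra_simps)
  show "Xd dl' (x, y, z) = Xd dl (psi_c (henon f eps dl) Hinv s (x, y, z)) - qd dl finv (s * x)"
    using pd(1) DE1 Ge by (simp add: qx_def)
  show "Yd dl' (x, y, z) = Zd dl (psi_c (henon f eps dl) Hinv s (x, y, z))
           *v (Yd dl (psi_v Hinv s (x, y, z)) + Zd dl (psi_v Hinv s (x, y, z)) *v qd dl finv (s * y))"
    using pd(2) DE2 Ge Pe by (simp add: qy_def)
  show "Zd dl' (x, y, z) = Zd dl (psi_c (henon f eps dl) Hinv s (x, y, z)) ** Zd dl (psi_v Hinv s (x, y, z))"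
    unfolding matrix_eq using pd(4) DE3 Ge Pe by (simp add: matrix_vector_mul_assoc)
qed

lemma idpsi:
  assumes rs: "renorm_step B F H Hinv s F'" and vB: "v \<in> B"
  shows "psi_v Hinv s (F' v) = F (psi_c F Hinv s v)"
proof -
  have s0: "s \<noteq> 0" using rs by (simp add: renorm_step_def)
  from rs obtain U D where H: "B \<subseteq> U" "\<forall>v\<in>D. Hinv (H v) = v"
     "\<forall>w\<in>U. F (F (Hinv (s *\<^sub>R w))) \<in> D \<and> F' w = (1 / s) *\<^sub>R H (F (F (Hinv (s *\<^sub>R w))))"
    unfolding renorm_step_def by (elim conjE exE) (erule that, assumption+)
  have vU: "v \<in> U" using H(1) vB by auto
  have e: "s *\<^sub>R F' v = H (F (F (Hinv (s *\<^sub>R v))))" using H(3) vU s0 by simp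
  have m: "F (F (Hinv (s *\<^sub>R v))) \<in> D" using H(3) vU by simp
  show ?thesis unfolding psi_v_def psi_c_def o_def e using H(2) m by simp
qed

lemma nstep:
  assumes rs: "renorm_step B F H Hinv s F'" and vB: "v \<in> B"
   and X: "Xd dl' v = Xd dl (psi_c F Hinv s v) - q1"
   and Y: "Yd dl' (F' v) = Zd dl (psi_c F Hinv s (F' v)) *v (Yd dl (psi_v Hinv s (F' v))
             + Zd dl (psi_v Hinv s (F' v)) *v q1)"
   and Z: "Zd dl' (F' v) = Zd dl (psi_c F Hinv s (F' v)) ** Zd dl (psi_v Hinv s (F' v))"
   and Np: "Yd dl (F (psi_c F Hinv s v)) + Zd dl (F (psi_c F Hinv s v)) *v Xd dl (psi_c F Hinv s v) = 0"
  shows "Yd dl' (F' v) + Zd dl' (F' v) *v Xd dl' v = 0"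
proof -
  note id = idpsi[OF rs vB]
  define Zc where "Zc = Zd dl (psi_c F Hinv s (F' v))"
  define Yv where "Yv = Yd dl (F (psi_c F Hinv s v))"
  define Zv where "Zv = Zd dl (F (psi_c F Hinv s v))"
  define Xc where "Xc = Xd dl (psi_c F Hinv s v)"
  have "Yd dl' (F' v) + Zd dl' (F' v) *v Xd dl' v
      = Zc *v (Yv + Zv *v q1) + (Zc ** Zv) *v (Xc - q1)"
    unfolding X Y Z id Zc_def Yv_def Zv_def Xc_def ..
  also have "\<dots> = Zc *v (Yv + Zv *v Xc)"
    by (simp add: matrix_vector_mul_assoc[symmetric] algebra_simps)
  also have "\<dots> = 0" using Np by (simp add: Yv_def Zv_def Xc_def)
  finally show ?thesis .
qed

definition Nlev :: "(nat \<Rightarrow> real \<Rightarrow> real) \<Rightarrow> (nat \<Rightarrow> 'm::finite pt \<Rightarrow> real)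
     \<Rightarrow> (nat \<Rightarrow> 'm pt \<Rightarrow> real ^ 'm) \<Rightarrow> nat \<Rightarrow> 'm pt \<Rightarrow> bool" where
  "Nlev f eps dl i v \<longleftrightarrow> Yd (dl i) (henon (f i) (eps i) (dl i) v)
      + Zd (dl i) (henon (f i) (eps i) (dl i) v) *v Xd (dl i) v = 0"

definition Fm :: "(nat \<Rightarrow> real \<Rightarrow> real) \<Rightarrow> (nat \<Rightarrow> 'm::finite pt \<Rightarrow> real)
     \<Rightarrow> (nat \<Rightarrow> 'm pt \<Rightarrow> real ^ 'm) \<Rightarrow> (nat \<Rightarrow> real \<Rightarrow> real) \<Rightarrow> (nat \<Rightarrow> real)
     \<Rightarrow> (nat \<Rightarrow> 'm pt \<Rightarrow> 'm pt) \<Rightarrow> nat \<Rightarrow> real \<Rightarrow> real \<Rightarrow> real ^ 'm \<Rightarrow> bool" where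
  "Fm f eps dl finv sg Hinv i x y z \<longleftrightarrow>
     Xd (dl (Suc i)) (x, y, z) =
           Xd (dl i) (psi_c (henon (f i) (eps i) (dl i)) (Hinv i) (sg i) (x, y, z))
           - qd (dl i) (finv i) (sg i * x)
     \<and> Yd (dl (Suc i)) (x, y, z) =
           Zd (dl i) (psi_c (henon (f i) (eps i) (dl i)) (Hinv i) (sg i) (x, y, z))
           *v (Yd (dl i) (psi_v (Hinv i) (sg i) (x, y, z))
               + Zd (dl i) (psi_v (Hinv i) (sg i) (x, y, z)) *v qd (dl i) (finv i) (sg i * y))
     \<and> Zd (dl (Suc i)) (x, y, z) =
           Zd (dl i) (psi_c (henon (f i) (eps i) (dl i)) (Hinv i) (sg i) (x, y, z))
           ** Zd (dl i) (psi_v (Hinv i) (sg i) (x, y, z))"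

lemma main_step:
  fixes B :: "'m::finite pt set"
  assumes inN: "in_N B (f 0) (eps 0) (dl 0) (finv 0) (sg 0) (Hinv 0) (henon (f 1) (eps 1) (dl 1))"
    and rn: "renormalizable_n B n f eps dl finv sg Hinv"
    and IH0: "i \<noteq> 0 \<Longrightarrow> (\<forall>v\<in>B. henon (f i) (eps i) (dl i) v \<in> B \<longrightarrow> Nlev f eps dl i v)"
    and le: "Suc i \<le> n"
  shows "(\<forall>x y z. (x, y, z) \<in> B \<longrightarrow> Fm f eps dl finv sg Hinv i x y z)
      \<and> (\<forall>v\<in>B. henon (f (Suc i)) (eps (Suc i)) (dl (Suc i)) v \<in> B \<longrightarrow> Nlev f eps dl (Suc i) v)"
proof -
  define F where "F = henon (f i) (eps i) (dl i)"
  define F' where "F' = henon (f (Suc i)) (eps (Suc i)) (dl (Suc i))"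
  have rs: "renorm_step B F (Hmap (f i) (eps i) (dl i) (finv i)) (Hinv i) (sg i) F'"
    using rn le by (simp add: renormalizable_n_def F_def F'_def)
  have fin: "finv i differentiable (at (sg i * x)) \<and> finv i differentiable (at (sg i * y))"
    if "(x, y, z) \<in> B" for x y z
    using rn le that unfolding renormalizable_n_def by (metis Suc_le_lessD insertCI)
  have ddl0: "\<forall>k\<le>n. (\<forall>t. f k differentiable (at t)) \<and> (\<forall>w. eps k differentiable (at w))
             \<and> (\<forall>w. dl k differentiable (at w))"
    using rn unfolding renormalizable_n_def by (elim conjE)
  have ddl: "dl i differentiable (at w)" for w
    using ddl0 Suc_leD[OF le] by blast
  have incv: "psi_v (Hinv i) (sg i) w \<in> B" if "w \<in> B" for w
    using rs that by (auto simp: renorm_step_def)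
  have incc: "psi_c F (Hinv i) (sg i) w \<in> B" if "w \<in> B" for w
    using rs that by (auto simp: renorm_step_def)
  have Nv: "Nlev f eps dl i (psi_v (Hinv i) (sg i) w)" if "w \<in> B" for w
  proof (cases "i = 0")
    case True
    thus ?thesis using inN that by (auto simp: in_N_def Nlev_def)
  next
    case False
    have "F (psi_v (Hinv i) (sg i) w) \<in> B" using incc[OF that] by (simp add: psi_c_def)
    thus ?thesis using IH0[OF False] incv[OF that] by (simp add: F_def)
  qed
  have FmB: "Fm f eps dl finv sg Hinv i x y z" if "(x, y, z) \<in> B" for x y z
  proof -
    have N: "Yd (dl i) (F (psi_v (Hinv i) (sg i) (x, y, z)))
       + Zd (dl i) (F (psi_v (Hinv i) (sg i) (x, y, z))) *v Xd (dl i) (psi_v (Hinv i) (sg i) (x, y, z)) = 0"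
      using Nv[OF that] by (simp add: Nlev_def F_def)
    note L = level[OF rs[unfolded F_def F'_def] ddl conjunct1[OF fin[OF that]] conjunct2[OF fin[OF that]]
        that N[unfolded F_def]]
    show ?thesis unfolding Fm_def using L by simp
  qed
  have Nc: "Nlev f eps dl i (psi_c F (Hinv i) (sg i) v)" if "v \<in> B" "F' v \<in> B" for v
  proof (cases "i = 0")
    case True
    thus ?thesis using inN that(1) by (auto simp: in_N_def Nlev_def F_def)
  next
    case False
    have "F (psi_c F (Hinv i) (sg i) v) \<in> B"
      using idpsi[OF rs that(1)] incv[OF that(2)] by simp
    thus ?thesis using IH0[OF False] incc[OF that(1)] by (simp add: F_def)
  qed
  have NS: "Nlev f eps dl (Suc i) v" if vB: "v \<in> B" and uB: "F' v \<in> B" for v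
  proof -
    obtain a b c where v: "v = (a, b, c)" by (cases v) auto
    obtain a' b' c' where u: "F' v = (a', b', c')" by (cases "F' v") auto
    have b': "b' = a" using u v by (simp add: F'_def henon_def)
    have Fv: "Fm f eps dl finv sg Hinv i a b c" using FmB vB v by simp
    have Fu: "Fm f eps dl finv sg Hinv i a' b' c'" using FmB uB u by simp
    have "Yd (dl (Suc i)) (F' v) + Zd (dl (Suc i)) (F' v) *v Xd (dl (Suc i)) v = 0"
    proof (rule nstep[OF rs vB])
      show "Xd (dl (Suc i)) v = Xd (dl i) (psi_c F (Hinv i) (sg i) v) - qd (dl i) (finv i) (sg i * a)"
        using Fv v by (simp add: Fm_def F_def)
      show "Yd (dl (Suc i)) (F' v) = Zd (dl i) (psi_c F (Hinv i) (sg i) (F' v)) *v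
          (Yd (dl i) (psi_v (Hinv i) (sg i) (F' v)) + Zd (dl i) (psi_v (Hinv i) (sg i) (F' v)) *v qd (dl i) (finv i) (sg i * a))"
        using Fu u b' by (simp add: Fm_def F_def)
      show "Zd (dl (Suc i)) (F' v) = Zd (dl i) (psi_c F (Hinv i) (sg i) (F' v)) ** Zd (dl i) (psi_v (Hinv i) (sg i) (F' v))"
        using Fu u by (simp add: Fm_def F_def)
      show "Yd (dl i) (F (psi_c F (Hinv i) (sg i) v)) + Zd (dl i) (F (psi_c F (Hinv i) (sg i) v)) *v Xd (dl i) (psi_c F (Hinv i) (sg i) v) = 0"
        using Nc[OF vB uB] by (simp add: Nlev_def F_def)
    qed
    thus ?thesis by (simp add: Nlev_def F'_def)
  qed
  show "(\<forall>x y z. (x, y, z) \<in> B \<longrightarrow> Fm f eps dl finv sg Hinv i x y z)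
      \<and> (\<forall>v\<in>B. henon (f (Suc i)) (eps (Suc i)) (dl (Suc i)) v \<in> B \<longrightarrow> Nlev f eps dl (Suc i) v)"
    using FmB NS by (auto simp: F'_def)
qed

lemma main_ind:
  fixes B :: "'m::finite pt set"
  assumes inN: "in_N B (f 0) (eps 0) (dl 0) (finv 0) (sg 0) (Hinv 0) (henon (f 1) (eps 1) (dl 1))"
    and rn: "renormalizable_n B n f eps dl finv sg Hinv"
  shows "Suc i \<le> n \<Longrightarrow> (\<forall>x y z. (x, y, z) \<in> B \<longrightarrow> Fm f eps dl finv sg Hinv i x y z)
      \<and> (\<forall>v\<in>B. henon (f (Suc i)) (eps (Suc i)) (dl (Suc i)) v \<in> B \<longrightarrow> Nlev f eps dl (Suc i) v)"
proof (induction i)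
  case 0
  show ?case by (rule main_step[OF inN rn _ 0]) simp
next
  case (Suc i)
  show ?case by (rule main_step[OF inN rn _ Suc.prems]) (use Suc in simp)
qed


theorem lemma3p1:
  fixes B :: "'m::finite pt set"
    and f :: "nat \<Rightarrow> real \<Rightarrow> real" and eps :: "nat \<Rightarrow> 'm pt \<Rightarrow> real"
    and dl :: "nat \<Rightarrow> 'm pt \<Rightarrow> real ^ 'm" and finv :: "nat \<Rightarrow> real \<Rightarrow> real"
    and sg :: "nat \<Rightarrow> real" and Hinv :: "nat \<Rightarrow> 'm pt \<Rightarrow> 'm pt"
    and n k :: nat and x y :: real and z :: "real ^ 'm"
  assumes "hypercube B"
    and "in_N B (f 0) (eps 0) (dl 0) (finv 0) (sg 0) (Hinv 0) (henon (f 1) (eps 1) (dl 1))"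
    and "renormalizable_n B n f eps dl finv sg Hinv"
    and "1 \<le> k" and "k \<le> n"
    and "(x, y, z) \<in> B"
  shows "Xd (dl k) (x, y, z) =
           Xd (dl (k - 1)) (psi_c (henon (f (k - 1)) (eps (k - 1)) (dl (k - 1)))
                              (Hinv (k - 1)) (sg (k - 1)) (x, y, z))
           - qd (dl (k - 1)) (finv (k - 1)) (sg (k - 1) * x)
         \<and> Yd (dl k) (x, y, z) =
           Zd (dl (k - 1)) (psi_c (henon (f (k - 1)) (eps (k - 1)) (dl (k - 1)))
                              (Hinv (k - 1)) (sg (k - 1)) (x, y, z))
           *v (Yd (dl (k - 1)) (psi_v (Hinv (k - 1)) (sg (k - 1)) (x, y, z))
               + Zd (dl (k - 1)) (psi_v (Hinv (k - 1)) (sg (k - 1)) (x, y, z))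
                 *v qd (dl (k - 1)) (finv (k - 1)) (sg (k - 1) * y))
         \<and> Zd (dl k) (x, y, z) =
           Zd (dl (k - 1)) (psi_c (henon (f (k - 1)) (eps (k - 1)) (dl (k - 1)))
                              (Hinv (k - 1)) (sg (k - 1)) (x, y, z))
           ** Zd (dl (k - 1)) (psi_v (Hinv (k - 1)) (sg (k - 1)) (x, y, z))"
  proof -
  obtain i where k: "k = Suc i" using assms(4) by (cases k) auto
  have "Fm f eps dl finv sg Hinv i x y z"
    using main_ind[OF assms(2) assms(3), of i] assms(5) assms(6) k by auto
  thus ?thesis using k by (simp add: Fm_def)
qed

end
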